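(* Assume the refinement setting of the context, with $F(u)=u$, $G(u)=u$, $p\cap\overline{q}\subseteq F(p\cup q)$, $p\cap\overline{q}\subseteq\mathrm{grd}(G)$, $p\cap\overline{q}\subseteq G(q)$, $$r^{-1}[p\cap\overline{q}]\cap\mathrm{grd}(G')\subseteq F'(\mathrm{grd}(G'))\cap H(\mathrm{grd}(G')),$$ and, in the concrete system $S'$, $$\big(r^{-1}[p\cap\overline{q}]\cap\overline{\mathrm{grd}(G')}\big)\leadsto\mathrm{grd}(G').$$ Then $r^{-1}[p]\leadsto r^{-1}[q]$ holds in $S'$.
   Context: Refinement setting: $u$ (abstract states) and $v$ (concrete states) are sets; $F,G$ are conjunctive set transformers on $u$ (conjunctive = preserves intersections of nonempty families of subsets, hence monotone). $\mathrm{grd}(E)=\overline{E(\varnothing)}$. The concrete system $S'$ has a finite family of conjunctive set transformers (events) on $v$, partitioned into three subfamilies whose choices (pointwise intersections) are $F'$, $G'$, $H$, the subfamily for $G'$ being nonempty; $S'(s)=F'(s)\cap G'(s)\cap H(s)$. $r\subseteq v\times u$ is a total relation (every $y\in v$ is related to some $x\in u$). For $a\subseteq v$, $r[a]=\{x\in u\mid\exists y\in a,(y,x)\in r\}$; for $b\subseteq u$, $r^{-1}[b]=\{y\in v\mid\exists x\in b,(y,x)\in r\}$. Complements $\overline{\cdot}$ are taken in $u$ for subsets of $u$ and in $v$ for subsets of $v$. Refinement conditions: for all $s\subseteq v$, $F(\overline{r[\overline{s}]})\subseteq\overline{r[\overline{F'(s)}]}$, $G(\overline{r[\overline{s}]})\subseteq\overline{r[\overline{G'(s)}]}$,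 $\overline{r[\overline{s}]}\subseteq\overline{r[\overline{H(s)}]}$. $p,q\subseteq u$. Ensures in $S'$: for $a,b\subseteq v$ and a helpful event $E$ (choice of a nonempty subfamily of the events of $S'$), $E\cdot a\gg_w b$ means $a\cap\overline{b}\subseteq S'(a\cup b)$ and $a\cap\overline{b}\subseteq\mathrm{grd}(E)\cap E(b)$. Leads-to $\leadsto$ in $S'$ is the smallest relation on $\mathbb{P}(v)$ such that: (BRL) if $E\cdot a\gg_w b$ for some helpful $E$ then $a\leadsto b$; (TRA) $a\leadsto c$ and $c\leadsto b$ imply $a\leadsto b$; (DSJ) if $a_m\leadsto b$ for all $m$ in an index set $M$ then $\bigcup_{m\in M}a_m\leadsto b$. *)

theory Defs
  imports Main
begin

(* Set transformers on the universe of a type ('a set = P(u) with u = UNIV). *)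

definition conjunctive :: "('a set \<Rightarrow> 'a set) \<Rightarrow> bool" where
  "conjunctive f \<longleftrightarrow> (\<forall>S. S \<noteq> {} \<longrightarrow> f (\<Inter>S) = \<Inter>(f ` S))"

definition grd :: "('a set \<Rightarrow> 'a set) \<Rightarrow> 'a set" where
  "grd E = - E {}"

definition choice :: "('i \<Rightarrow> ('a set \<Rightarrow> 'a set)) \<Rightarrow> 'i set \<Rightarrow> 'a set \<Rightarrow> 'a set" where
  "choice ev J = (\<lambda>s. \<Inter>i\<in>J. ev i s)"

(* E . a >>_w b in the system with events ev i, i \<in> I, helpful event = choice over J *)
definition ensures_w :: "('i \<Rightarrow> ('a set \<Rightarrow> 'a set)) \<Rightarrow> 'i set \<Rightarrow> 'i set \<Rightarrow> 'a set \<Rightarrow> 'a set \<Rightarrow> bool" where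
  "ensures_w ev I J a b \<longleftrightarrow>
     a \<inter> - b \<subseteq> choice ev I (a \<union> b) \<and>
     a \<inter> - b \<subseteq> grd (choice ev J) \<inter> choice ev J b"

inductive leadsto :: "('i \<Rightarrow> ('a set \<Rightarrow> 'a set)) \<Rightarrow> 'i set \<Rightarrow> 'a set \<Rightarrow> 'a set \<Rightarrow> bool"
  for ev :: "'i \<Rightarrow> ('a set \<Rightarrow> 'a set)" and I :: "'i set" where
  BRL: "\<lbrakk>J \<subseteq> I; J \<noteq> {}; ensures_w ev I J a b\<rbrakk> \<Longrightarrow> leadsto ev I a b"
| TRA: "\<lbrakk>leadsto ev I a c; leadsto ev I c b\<rbrakk> \<Longrightarrow> leadsto ev I a b"
| DSJ: "(\<And>a. a \<in> A \<Longrightarrow> leadsto ev I a b) \<Longrightarrow> leadsto ev I (\<Union>A) b"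

end

theory Submission
  imports Defs
begin

lemma conj_Int: "conjunctive f \<Longrightarrow> f (X \<inter> Y) = f X \<inter> f Y"
  unfolding conjunctive_def by (drule spec[of _ "{X,Y}"]) simp

lemma conj_mono: "conjunctive f \<Longrightarrow> X \<subseteq> Y \<Longrightarrow> f X \<subseteq> f Y"
proof -
  assume a: "conjunctive f" "X \<subseteq> Y"
  then have "X = X \<inter> Y" by blast
  then have "f X = f X \<inter> f Y" using conj_Int[OF a(1), of X Y] by simp
  then show ?thesis by blast
qed

lemma choice_Int: "\<forall>i\<in>J. conjunctive (ev i) \<Longrightarrow>
  choice ev J (X \<inter> Y) = choice ev J X \<inter> choice ev J Y"
  unfolding choice_def by (auto simp: conj_Int)

lemma choice_mono: "\<forall>i\<in>J. conjunctive (ev i) \<Longrightarrow> X \<subseteq> Y \<Longrightarrow>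
  choice ev J X \<subseteq> choice ev J Y"
  unfolding choice_def
proof
  fix z assume a: "\<forall>i\<in>J. conjunctive (ev i)" "X \<subseteq> Y" and z: "z \<in> (\<Inter>i\<in>J. ev i X)"
  show "z \<in> (\<Inter>i\<in>J. ev i Y)"
  proof
    fix i assume i: "i \<in> J"
    then have "z \<in> ev i X" using z by blast
    then show "z \<in> ev i Y" using conj_mono[of "ev i" X Y] a i by blast
  qed
qed

lemma choice_anti: "J \<subseteq> K \<Longrightarrow> choice ev K s \<subseteq> choice ev J s"
  unfolding choice_def by auto
lemma lt_subset: "J \<subseteq> I \<Longrightarrow> J \<noteq> {} \<Longrightarrow> a \<subseteq> b \<Longrightarrow> leadsto ev I a b"
  by (rule BRL[of J]) (auto simp: ensures_w_def)

lemma lt_union: "leadsto ev I a1 b \<Longrightarrow> leadsto ev I a2 b \<Longrightarrow> leadsto ev I (a1 \<union> a2) b"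
  using DSJ[of "{a1,a2}" ev I b] by auto

lemma psp:
  assumes "leadsto ev I a b"
    and cj: "\<forall>i\<in>I. conjunctive (ev i)" and J0: "J0 \<subseteq> I" "J0 \<noteq> {}"
    and un: "c \<inter> - d \<subseteq> choice ev I (c \<union> d)"
  shows "leadsto ev I (a \<inter> c) ((b \<inter> c) \<union> d)"
  using assms(1)
proof (induction rule: leadsto.induct)
  case (BRL J a b)
  have e1: "a \<inter> - b \<subseteq> choice ev I (a \<union> b)" and
       e2: "a \<inter> - b \<subseteq> grd (choice ev J) \<inter> choice ev J b"
    using BRL(3) unfolding ensures_w_def by auto
  have cjJ: "\<forall>i\<in>J. conjunctive (ev i)" using cj BRL(1) by auto
  have g1: "a \<inter> c \<inter> - ((b \<inter> c) \<union> d) \<subseteq> choice ev I ((a \<inter> c) \<union> ((b \<inter> c) \<union> d))"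
  proof -
    have "a \<inter> c \<inter> - ((b \<inter> c) \<union> d) \<subseteq> choice ev I (a \<union> b) \<inter> choice ev I (c \<union> d)"
      using e1 un by blast
    also have "\<dots> = choice ev I ((a \<union> b) \<inter> (c \<union> d))" using choice_Int[OF cj] by simp
    also have "\<dots> \<subseteq> choice ev I ((a \<inter> c) \<union> ((b \<inter> c) \<union> d))"
      by (rule choice_mono[OF cj]) blast
    finally show ?thesis .
  qed
  have g2: "a \<inter> c \<inter> - ((b \<inter> c) \<union> d) \<subseteq> grd (choice ev J) \<inter> choice ev J ((b \<inter> c) \<union> d)"
  proof -
    have "a \<inter> c \<inter> - ((b \<inter> c) \<union> d) \<subseteq> choice ev J b \<inter> choice ev J (c \<union> d)"
      using e2 un choice_anti[OF BRL(1), of ev "c \<union> d"] by blast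
    also have "\<dots> = choice ev J (b \<inter> (c \<union> d))" using choice_Int[OF cjJ] by simp
    also have "\<dots> \<subseteq> choice ev J ((b \<inter> c) \<union> d)"
      by (rule choice_mono[OF cjJ]) blast
    finally show ?thesis using e2 by blast
  qed
  show ?case
    using g1 g2 unfolding ensures_w_def by (intro leadsto.BRL[OF BRL(1) BRL(2)]) (simp only: ensures_w_def)
next
  case (TRA a c' b)
  have "leadsto ev I d ((b \<inter> c) \<union> d)" by (rule lt_subset[OF J0]) blast
  then have "leadsto ev I ((c' \<inter> c) \<union> d) ((b \<inter> c) \<union> d)" by (rule lt_union[OF TRA(4)])
  then show ?case by (rule leadsto.TRA[OF TRA(3)])
next
  case (DSJ A b)
  have "leadsto ev I (\<Union>((\<lambda>x. x \<inter> c) ` A)) ((b \<inter> c) \<union> d)"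
  proof (rule leadsto.DSJ)
    fix x assume "x \<in> (\<lambda>x. x \<inter> c) ` A"
    then obtain y where "y \<in> A" "x = y \<inter> c" by blast
    then show "leadsto ev I x ((b \<inter> c) \<union> d)" using DSJ(2) by simp
  qed
  moreover have "\<Union>A \<inter> c = \<Union>((\<lambda>x. x \<inter> c) ` A)" by auto
  ultimately show ?case by (simp only:)
qed

theorem lemma7:
  fixes F G :: "'u set \<Rightarrow> 'u set"
    and ev :: "'i \<Rightarrow> ('v set \<Rightarrow> 'v set)"
    and I IF IG IH :: "'i set"
    and r :: "('v \<times> 'u) set"
    and p q :: "'u set"
  defines "F' \<equiv> choice ev IF"
    and "G' \<equiv> choice ev IG"
    and "H \<equiv> choice ev IH"
  assumes conjF: "conjunctive F" and conjG: "conjunctive G"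
    and finI: "finite I"
    and conj_ev: "\<forall>i\<in>I. conjunctive (ev i)"
    and partition: "I = IF \<union> IG \<union> IH" "IF \<inter> IG = {}" "IF \<inter> IH = {}" "IG \<inter> IH = {}"
    and IG_ne: "IG \<noteq> {}"
    and total: "\<forall>y. \<exists>x. (y, x) \<in> r"
    and refF: "\<forall>s. F (- (r `` (- s))) \<subseteq> - (r `` (- F' s))"
    and refG: "\<forall>s. G (- (r `` (- s))) \<subseteq> - (r `` (- G' s))"
    and refH: "\<forall>s. - (r `` (- s)) \<subseteq> - (r `` (- H s))"
    and F_univ: "F UNIV = UNIV" and G_univ: "G UNIV = UNIV"
    and h1: "p \<inter> - q \<subseteq> F (p \<union> q)"
    and h2: "p \<inter> - q \<subseteq> grd G"
    and h3: "p \<inter> - q \<subseteq> G q"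
    and h4: "(r\<inverse>) `` (p \<inter> - q) \<inter> grd G' \<subseteq> F' (grd G') \<inter> H (grd G')"
    and h5: "leadsto ev I ((r\<inverse>) `` (p \<inter> - q) \<inter> - grd G') (grd G')"
  shows "leadsto ev I ((r\<inverse>) `` p) ((r\<inverse>) `` q)"
proof -
  define A where "A = (r\<inverse>) `` p"
  define B where "B = (r\<inverse>) `` q"
  define D where "D = (r\<inverse>) `` (p \<inter> - q)"
  have IGI: "IG \<subseteq> I" using partition by auto
  have cF: "\<forall>i\<in>IF. conjunctive (ev i)" and cG: "\<forall>i\<in>IG. conjunctive (ev i)"
    and cH: "\<forall>i\<in>IH. conjunctive (ev i)" using conj_ev partition by auto
  have AD: "A \<subseteq> D \<union> B" and DA: "D \<subseteq> A" unfolding A_def B_def D_def by auto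
  have pq1: "p \<union> q \<subseteq> - (r `` (- (A \<union> B)))" unfolding A_def B_def by auto
  have pq2: "q \<subseteq> - (r `` (- B))" unfolding B_def by auto
  have DF: "D \<subseteq> F' (A \<union> B)"
  proof
    fix y assume "y \<in> D"
    then obtain x where x: "x \<in> p \<inter> - q" "(y, x) \<in> r" unfolding D_def by auto
    have "x \<in> F (- (r `` (- (A \<union> B))))" using x h1 conj_mono[OF conjF pq1] by blast
    then have "x \<in> - (r `` (- F' (A \<union> B)))" using refF by blast
    then show "y \<in> F' (A \<union> B)" using x by auto
  qed
  have DG: "D \<subseteq> G' B"
  proof
    fix y assume "y \<in> D"
    then obtain x where x: "x \<in> p \<inter> - q" "(y, x) \<in> r" unfolding D_def by auto
    have "x \<in> G (- (r `` (- B)))" using x h3 conj_mono[OF conjG pq2] by blast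
    then have "x \<in> - (r `` (- G' B))" using refG by blast
    then show "y \<in> G' B" using x by auto
  qed
  have DH: "D \<subseteq> H (A \<union> B)"
  proof
    fix y assume "y \<in> D"
    then obtain x where x: "x \<in> p \<inter> - q" "(y, x) \<in> r" unfolding D_def by auto
    have "x \<in> - (r `` (- (A \<union> B)))" using x pq1 by blast
    then have "x \<in> - (r `` (- H (A \<union> B)))" using refH by blast
    then show "y \<in> H (A \<union> B)" using x by auto
  qed
  have S': "choice ev I s = F' s \<inter> G' s \<inter> H s" for s
    unfolding F'_def G'_def H_def choice_def partition(1) by auto
  have Gm: "G' B \<subseteq> G' (A \<union> B)" unfolding G'_def by (rule choice_mono[OF cG]) blast
  have un: "A \<inter> - B \<subseteq> choice ev I (A \<union> B)"
    using AD DF DG DH Gm S' by blast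
  have l1: "leadsto ev I (D \<inter> - grd G' \<inter> A) ((grd G' \<inter> A) \<union> B)"
    using psp[OF h5[folded D_def] conj_ev IGI IG_ne un] .
  have l2: "leadsto ev I (A \<inter> grd G') B"
  proof (rule BRL[OF IGI IG_ne], unfold ensures_w_def, intro conjI)
    have a: "A \<inter> grd G' \<inter> - B \<subseteq> D \<inter> grd G'" using AD by blast
    have "D \<inter> grd G' \<subseteq> F' ((A \<union> B) \<inter> grd G')"
      using DF h4[folded D_def] choice_Int[OF cF] unfolding F'_def by blast
    also have "\<dots> \<subseteq> F' (A \<inter> grd G' \<union> B)" unfolding F'_def by (rule choice_mono[OF cF]) blast
    finally have f: "D \<inter> grd G' \<subseteq> F' (A \<inter> grd G' \<union> B)" .
    have "D \<inter> grd G' \<subseteq> H ((A \<union> B) \<inter> grd G')"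
      using DH h4[folded D_def] choice_Int[OF cH] unfolding H_def by blast
    also have "\<dots> \<subseteq> H (A \<inter> grd G' \<union> B)" unfolding H_def by (rule choice_mono[OF cH]) blast
    finally have h: "D \<inter> grd G' \<subseteq> H (A \<inter> grd G' \<union> B)" .
    have "G' B \<subseteq> G' (A \<inter> grd G' \<union> B)" unfolding G'_def by (rule choice_mono[OF cG]) blast
    then show "A \<inter> grd G' \<inter> - B \<subseteq> choice ev I (A \<inter> grd G' \<union> B)"
      using a f h DG S' by blast
    show "A \<inter> grd G' \<inter> - B \<subseteq> grd (choice ev IG) \<inter> choice ev IG B"
      using a DG unfolding G'_def by blast
  qed
  have lB: "leadsto ev I B B" by (rule lt_subset[OF IGI IG_ne]) blast
  have l3: "leadsto ev I ((grd G' \<inter> A) \<union> B) B"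
    using lt_union[OF l2 lB] by (metis Int_commute)
  have l4: "leadsto ev I (D \<inter> - grd G' \<inter> A) B" using TRA[OF l1 l3] .
  have l5: "leadsto ev I ((A \<inter> grd G') \<union> (D \<inter> - grd G' \<inter> A) \<union> B) B"
    using lt_union[OF lt_union[OF l2 l4] lB] .
  have "leadsto ev I A ((A \<inter> grd G') \<union> (D \<inter> - grd G' \<inter> A) \<union> B)"
    by (rule lt_subset[OF IGI IG_ne]) (use AD in blast)
  then show ?thesis using TRA[OF _ l5] unfolding A_def B_def by blast
qed

end
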